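(* Let $\mathcal H^1_{\mathrm{TT}}=(C,F^1,D,G)$ satisfy the Hybrid Basic Conditions, let $(\Phi,\{H_k\}_{k=1}^\infty)$ with $\Phi=(\phi_s,\phi_f)$ and $H_k=(h_{s,k},h_{f,k})$ be a two-timescale asymptotic simulation of $\mathcal H^1_{\mathrm{TT}}$, and let $\Lambda:\mathbb R^{n_s}\rightrightarrows\mathbb R^{n_f}$ have compact graph with $\omega(\Phi)\subset\mathrm{gph}(\Lambda)$. Then $(\phi_s,\{h_{s,k}\}_{k=1}^\infty)$ is an asymptotic simulation of the reduced system $\mathcal H^\Lambda_{\mathrm R}$.
   Context: Hybrid inclusions. A hybrid inclusion $\mathcal H=(C,F,D,G)$ on $\mathbb R^n$ consists of sets $C,D\subset\mathbb R^n$ and set-valued maps $F,G:\mathbb R^n\rightrightarrows\mathbb R^n$ ($x\in C,\ \dot x\in F(x)$; $x\in D,\ x^+\in G(x)$). It satisfies the Hybrid Basic Conditions if $C,D$ are closed; $F,G$ are outer semicontinuous and locally bounded; $F(x)$ is nonempty and convex for every $x\in C$; $G(x)$ is nonempty for every $x\in D$. $F_C(x):=F(x)$ for $x\in C$, $\emptyset$ otherwise; $G_D$ analogously. Hybrid sequences. A compact hybrid sequence domain is $\bigcup_{j=0}^{J-1}(\{k_j,\dots,k_{j+1}\}\times\{j\})$ with $J\in\mathbb N$, integers $0=k_0\le\dots\le k_J$; a hybrid sequence domain is a union of a nondecreasing sequence of such sets; a hybrid sequence is a map on a hybrid sequence domain; complete = unbounded domain; complete in the $k$- (resp. $j$-)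 direction = set of $k$'s (resp. $j$'s) in the domain unbounded. $\bar\jmath_k:=\inf\{j:(k+1,j)\in\mathrm{dom}\,\phi\}$, $\bar k_j:=\inf\{k:(k,j+1)\in\mathrm{dom}\,\phi\}$. $\limsup$ of a sequence = set of its accumulation points. $\omega(\phi)$ = set of all $\lim_i\phi(k_i,j_i)$ with $(k_i,j_i)\in\mathrm{dom}\,\phi$, $k_i+j_i\to\infty$. Asymptotic simulations. $\{h_k\}$ is admissible if $h_k>0$, $h_k\to0$, $\sum h_k=\infty$; $\tau_k:=\sum_{i=0}^{k-1}h_{i+1}$, $m(t):=\max\{k:\tau_k\le t\}$. $(\phi,\{h_k\})$ is an asymptotic simulation of $\mathcal H$ if $\phi$ is a bounded complete hybrid sequence, $\{h_k\}$ is admissible, and: (1) if $\phi$ is complete in the $k$-direction, there is a bounded sequence $\{f_k\}_{k\ge0}$ with $\limsup_{k}(\phi(k,\bar\jmath_k),f_k)\subset\mathrm{gph}(F_C)$ and, with $\hat f_{k+1}:=(\phi(k+1,\bar\jmath_k)-\phi(k,\bar\jmath_k))/h_{k+1}$, for each $T>0$, $\lim_{n\to\infty}\sup_{n+1\le k\le m(\tau_n+T)}|\sum_{i=n}^{k-1}h_{i+1}(\hat f_{i+1}-f_i)|=0$; (2) if $\phi$ is complete in the $j$-direction, $\limsup_{j}(\phi(\bar k_j,j),\phi(\bar k_j,j+1))\subset\mathrm{gph}(G_D)$. Two-timescale setting. $n=n_s+n_f$, $x=(x_s,x_f)$. $\mathcal H^1_{\mathrm{TT}}=(C,F^1,D,G)$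 with $C,D\subset\mathbb R^n$, $F_s:\mathbb R^n\rightrightarrows\mathbb R^{n_s}$, $F_f:\mathbb R^n\rightrightarrows\mathbb R^{n_f}$, $F^1(x):=F_s(x)\times F_f(x)$, $G:\mathbb R^n\rightrightarrows\mathbb R^n$. $\{H_k\}$, $H_k=(h_{s,k},h_{f,k})\in\mathbb R^2_{>0}$, is two-timescale admissible if both component sequences are admissible and $h_{s,k}/h_{f,k}\to0$. For $r\in\{s,f\}$: $\tau_{r,k}:=\sum_{i=0}^{k-1}h_{r,i+1}$, $m_r(t):=\max\{k:\tau_{r,k}\le t\}$, $\mathcal I_{r,n,T}:=\{k:n+1\le k\le m_r(\tau_{r,n}+T)\}$. $(\Phi,\{H_k\})$ is a two-timescale asymptotic simulation of $\mathcal H^1_{\mathrm{TT}}$ if $\Phi=(\phi_s,\phi_f)$ is a bounded complete hybrid sequence, $\{H_k\}$ is two-timescale admissible, and: (1) if $\Phi$ is complete in the $k$-direction, there is a bounded sequence $f_k=(f_{s,k},f_{f,k})$ with $\limsup_k(\Phi(k,\bar\jmath_k),f_k)\subset\mathrm{gph}(F^1_C)$ and, with $\hat f_{r,k+1}:=(\phi_r(k+1,\bar\jmath_k)-\phi_r(k,\bar\jmath_k))/h_{r,k+1}$, for all $T>0$ and $r\in\{s,f\}$, $\lim_{n\to\infty}\sup_{k\in\mathcal I_{r,n,T}}|\sum_{i=n}^{k-1}h_{r,i+1}(\hat f_{r,i+1}-f_{r,i})|=0$; (2) if $\Phi$ is complete in the $j$-direction, $\limsup_j(\Phi(\bar k_j,j),\Phi(\bar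 k_j,j+1))\subset\mathrm{gph}(G_D)$. Reduced system. Given $\Lambda:\mathbb R^{n_s}\rightrightarrows\mathbb R^{n_f}$, define $\Lambda^C_{\mathrm R},\Lambda^D_{\mathrm R}:\mathbb R^{n_s}\rightrightarrows\mathbb R^{n_f}$ by $\mathrm{gph}(\Lambda^C_{\mathrm R}):=\mathrm{gph}(\Lambda)\cap C$ and $\mathrm{gph}(\Lambda^D_{\mathrm R}):=\mathrm{gph}(\Lambda)\cap D$. Set $C^\Lambda_{\mathrm R}:=\mathrm{dom}(\Lambda^C_{\mathrm R})$, $D^\Lambda_{\mathrm R}:=\mathrm{dom}(\Lambda^D_{\mathrm R})$, $F^\Lambda_{\mathrm R}(x_s):=\overline{\mathrm{co}}\{f_s\in\mathbb R^{n_s}:f_s\in F_s(x_s,x_f),\ x_f\in\Lambda^C_{\mathrm R}(x_s)\}$ (closed convex hull), and, with $G_s(x_s,x_f):=\mathrm{proj}_{\mathbb R^{n_s}}G(x_s,x_f)$, $G^\Lambda_{\mathrm R}(x_s):=\{g_s:g_s\in G_s(x_s,x_f),\ x_f\in\Lambda^D_{\mathrm R}(x_s)\}$. The reduced system is the hybrid inclusion $\mathcal H^\Lambda_{\mathrm R}$ on $\mathbb R^{n_s}$ with data $(C^\Lambda_{\mathrm R},F^\Lambda_{\mathrm R},D^\Lambda_{\mathrm R},G^\Lambda_{\mathrm R})$. *)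

theory Defs
  imports "HOL-Analysis.Analysis"
begin

definition gph :: "('a \<Rightarrow> 'b set) \<Rightarrow> ('a \<times> 'b) set" where
  "gph F = {(x, y). y \<in> F x}"

definition gph_on :: "'a set \<Rightarrow> ('a \<Rightarrow> 'b set) \<Rightarrow> ('a \<times> 'b) set" where
  "gph_on C F = {(x, y). x \<in> C \<and> y \<in> F x}"

definition osc :: "('a::metric_space \<Rightarrow> 'b::metric_space set) \<Rightarrow> bool" where
  "osc F \<longleftrightarrow> (\<forall>x y xs ys. (\<forall>i. ys i \<in> F (xs i)) \<and> xs \<longlonglongrightarrow> x \<and> ys \<longlonglongrightarrow> y
                  \<longrightarrow> y \<in> F x)"

definition locally_bounded :: "('a::metric_space \<Rightarrow> 'b::metric_space set) \<Rightarrow> bool" where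
  "locally_bounded F \<longleftrightarrow> (\<forall>x. \<exists>U. open U \<and> x \<in> U \<and> bounded (\<Union>(F ` U)))"

definition hybrid_basic_conditions ::
  "('a::euclidean_space) set \<Rightarrow> ('a \<Rightarrow> 'a set) \<Rightarrow> 'a set \<Rightarrow> ('a \<Rightarrow> 'a set) \<Rightarrow> bool" where
  "hybrid_basic_conditions C F D G \<longleftrightarrow>
     closed C \<and> closed D \<and> osc F \<and> osc G \<and> locally_bounded F \<and> locally_bounded G \<and>
     (\<forall>x\<in>C. F x \<noteq> {} \<and> convex (F x)) \<and> (\<forall>x\<in>D. G x \<noteq> {})"

definition compact_hsd :: "(nat \<times> nat) set \<Rightarrow> bool" where
  "compact_hsd E \<longleftrightarrow> (\<exists>(J::nat) (k::nat \<Rightarrow> nat). k 0 = 0 \<and> (\<forall>j<J. k j \<le> k (Suc j)) \<and>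
       E = (\<Union>j<J. {k j..k (Suc j)} \<times> {j}))"

definition hsd :: "(nat \<times> nat) set \<Rightarrow> bool" where
  "hsd E \<longleftrightarrow> (\<exists>S::nat \<Rightarrow> (nat \<times> nat) set. (\<forall>i. compact_hsd (S i)) \<and>
       (\<forall>i. S i \<subseteq> S (Suc i)) \<and> E = (\<Union>i. S i))"

text \<open>A hybrid sequence is a map \<phi> on a hybrid sequence domain E
  (values of \<phi> outside E are irrelevant).\<close>
definition complete_dom :: "(nat \<times> nat) set \<Rightarrow> bool" where
  "complete_dom E \<longleftrightarrow> infinite E"

definition complete_k :: "(nat \<times> nat) set \<Rightarrow> bool" where
  "complete_k E \<longleftrightarrow> infinite (fst ` E)"

definition complete_j :: "(nat \<times> nat) set \<Rightarrow> bool" where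
  "complete_j E \<longleftrightarrow> infinite (snd ` E)"

definition bounded_complete_hseq :: "(nat \<times> nat) set \<Rightarrow> (nat \<times> nat \<Rightarrow> 'a::metric_space) \<Rightarrow> bool" where
  "bounded_complete_hseq E \<phi> \<longleftrightarrow> hsd E \<and> bounded (\<phi> ` E) \<and> complete_dom E"

definition jbar :: "(nat \<times> nat) set \<Rightarrow> nat \<Rightarrow> nat" where
  "jbar E k = Inf {j. (Suc k, j) \<in> E}"

definition kbar :: "(nat \<times> nat) set \<Rightarrow> nat \<Rightarrow> nat" where
  "kbar E j = Inf {k. (k, Suc j) \<in> E}"

text \<open>limsup of a sequence = set of its accumulation points.\<close>
definition acc_pts :: "(nat \<Rightarrow> 'a::topological_space) \<Rightarrow> 'a set" where
  "acc_pts x = {y. \<exists>r. strict_mono r \<and> (x \<circ> r) \<longlonglongrightarrow> y}"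

definition omega_limit :: "(nat \<times> nat) set \<Rightarrow> (nat \<times> nat \<Rightarrow> 'a::topological_space) \<Rightarrow> 'a set" where
  "omega_limit E \<phi> = {y. \<exists>s::nat \<Rightarrow> nat \<times> nat. (\<forall>i. s i \<in> E) \<and>
      filterlim (\<lambda>i. fst (s i) + snd (s i)) at_top sequentially \<and> (\<lambda>i. \<phi> (s i)) \<longlonglongrightarrow> y}"

section \<open>Step sizes (indexed from 1: h 1, h 2, ...; h 0 unused)\<close>

definition tau :: "(nat \<Rightarrow> real) \<Rightarrow> nat \<Rightarrow> real" where
  "tau h k = (\<Sum>i<k. h (Suc i))"

definition admissible :: "(nat \<Rightarrow> real) \<Rightarrow> bool" where
  "admissible h \<longleftrightarrow> (\<forall>k\<ge>1. 0 < h k) \<and> h \<longlonglongrightarrow> 0 \<and> filterlim (tau h) at_top sequentially"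

definition mfun :: "(nat \<Rightarrow> real) \<Rightarrow> real \<Rightarrow> nat" where
  "mfun h t = (GREATEST k. tau h k \<le> t)"

definition tt_admissible :: "(nat \<Rightarrow> real) \<Rightarrow> (nat \<Rightarrow> real) \<Rightarrow> bool" where
  "tt_admissible hs hf \<longleftrightarrow> admissible hs \<and> admissible hf \<and> (\<lambda>k. hs k / hf k) \<longlonglongrightarrow> 0"

text \<open>fhat_next E h \<phi> i is \<open>\<hat>f_{i+1}\<close>.\<close>
definition fhat_next :: "(nat \<times> nat) set \<Rightarrow> (nat \<Rightarrow> real) \<Rightarrow> (nat \<times> nat \<Rightarrow> 'a::real_normed_vector) \<Rightarrow> nat \<Rightarrow> 'a" where
  "fhat_next E h \<phi> i = (\<phi> (Suc i, jbar E i) - \<phi> (i, jbar E i)) /\<^sub>R h (Suc i)"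

definition sum_cond :: "(nat \<times> nat) set \<Rightarrow> (nat \<Rightarrow> real) \<Rightarrow> (nat \<times> nat \<Rightarrow> 'a::real_normed_vector) \<Rightarrow> (nat \<Rightarrow> 'a) \<Rightarrow> bool" where
  "sum_cond E h \<phi> f \<longleftrightarrow> (\<forall>T>0. \<forall>\<epsilon>>0. \<exists>N. \<forall>n\<ge>N. \<forall>k. n + 1 \<le> k \<and> k \<le> mfun h (tau h n + T) \<longrightarrow>
       norm (\<Sum>i\<in>{n..<k}. h (Suc i) *\<^sub>R (fhat_next E h \<phi> i - f i)) < \<epsilon>)"

definition asym_sim ::
  "'a::euclidean_space set \<Rightarrow> ('a \<Rightarrow> 'a set) \<Rightarrow> 'a set \<Rightarrow> ('a \<Rightarrow> 'a set) \<Rightarrow>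
   (nat \<times> nat) set \<Rightarrow> (nat \<times> nat \<Rightarrow> 'a) \<Rightarrow> (nat \<Rightarrow> real) \<Rightarrow> bool" where
  "asym_sim C F D G E \<phi> h \<longleftrightarrow>
     bounded_complete_hseq E \<phi> \<and> admissible h \<and>
     (complete_k E \<longrightarrow> (\<exists>f::nat \<Rightarrow> 'a. bounded (range f) \<and>
         acc_pts (\<lambda>k. (\<phi> (k, jbar E k), f k)) \<subseteq> gph_on C F \<and> sum_cond E h \<phi> f)) \<and>
     (complete_j E \<longrightarrow>
         acc_pts (\<lambda>j. (\<phi> (kbar E j, j), \<phi> (kbar E j, Suc j))) \<subseteq> gph_on D G)"

definition F1 :: "('s \<times> 'f \<Rightarrow> 's set) \<Rightarrow> ('s \<times> 'f \<Rightarrow> 'f set) \<Rightarrow> 's \<times> 'f \<Rightarrow> ('s \<times> 'f) set" where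
  "F1 Fs Ff x = Fs x \<times> Ff x"

definition tt_asym_sim ::
  "('s::euclidean_space \<times> 'f::euclidean_space) set \<Rightarrow> ('s \<times> 'f \<Rightarrow> 's set) \<Rightarrow> ('s \<times> 'f \<Rightarrow> 'f set) \<Rightarrow>
   ('s \<times> 'f) set \<Rightarrow> ('s \<times> 'f \<Rightarrow> ('s \<times> 'f) set) \<Rightarrow>
   (nat \<times> nat) set \<Rightarrow> (nat \<times> nat \<Rightarrow> 's \<times> 'f) \<Rightarrow> (nat \<Rightarrow> real) \<Rightarrow> (nat \<Rightarrow> real) \<Rightarrow> bool" where
  "tt_asym_sim C Fs Ff D G E \<Phi> hs hf \<longleftrightarrow>
     bounded_complete_hseq E \<Phi> \<and> tt_admissible hs hf \<and>
     (complete_k E \<longrightarrow> (\<exists>f::nat \<Rightarrow> 's \<times> 'f. bounded (range f) \<and>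
         acc_pts (\<lambda>k. (\<Phi> (k, jbar E k), f k)) \<subseteq> gph_on C (F1 Fs Ff) \<and>
         sum_cond E hs (\<lambda>p. fst (\<Phi> p)) (\<lambda>k. fst (f k)) \<and>
         sum_cond E hf (\<lambda>p. snd (\<Phi> p)) (\<lambda>k. snd (f k)))) \<and>
     (complete_j E \<longrightarrow>
         acc_pts (\<lambda>j. (\<Phi> (kbar E j, j), \<Phi> (kbar E j, Suc j))) \<subseteq> gph_on D G)"

definition LambdaR :: "('s \<Rightarrow> 'f set) \<Rightarrow> ('s \<times> 'f) set \<Rightarrow> 's \<Rightarrow> 'f set" where
  "LambdaR \<Lambda> S xs = {xf. xf \<in> \<Lambda> xs \<and> (xs, xf) \<in> S}"

definition CR :: "('s \<Rightarrow> 'f set) \<Rightarrow> ('s \<times> 'f) set \<Rightarrow> 's set" where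
  "CR \<Lambda> C = {xs. LambdaR \<Lambda> C xs \<noteq> {}}"

definition DR :: "('s \<Rightarrow> 'f set) \<Rightarrow> ('s \<times> 'f) set \<Rightarrow> 's set" where
  "DR \<Lambda> D = {xs. LambdaR \<Lambda> D xs \<noteq> {}}"

definition FR :: "('s \<Rightarrow> 'f set) \<Rightarrow> ('s \<times> 'f) set \<Rightarrow> ('s \<times> 'f \<Rightarrow> 's::real_normed_vector set) \<Rightarrow> 's \<Rightarrow> 's set" where
  "FR \<Lambda> C Fs xs = closure (convex hull {fs. \<exists>xf \<in> LambdaR \<Lambda> C xs. fs \<in> Fs (xs, xf)})"

definition GR :: "('s \<Rightarrow> 'f set) \<Rightarrow> ('s \<times> 'f) set \<Rightarrow> ('s \<times> 'f \<Rightarrow> ('s \<times> 'f) set) \<Rightarrow> 's \<Rightarrow> 's set" where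
  "GR \<Lambda> D G xs = {gs. \<exists>xf \<in> LambdaR \<Lambda> D xs. gs \<in> fst ` G (xs, xf)}"

end

theory Submission
  imports Defs
begin

lemma hsd_unfold:
  assumes "hsd E" "x \<in> E"
  obtains J kk where "kk 0 = 0" "\<forall>j<J. kk j \<le> kk (Suc j)"
    "x \<in> (\<Union>j<J. {kk j..kk (Suc j)} \<times> {j})" "(\<Union>j<J. {kk j..kk (Suc j)} \<times> {j}) \<subseteq> E"
proof -
  obtain S :: "nat \<Rightarrow> (nat \<times> nat) set" where S: "\<forall>i. compact_hsd (S i)" "\<forall>i. S i \<subseteq> S (Suc i)" "E = (\<Union>i. S i)"
    using assms(1) unfolding hsd_def by (elim exE conjE) (rule that)
  have "x \<in> (\<Union>i. S i)" using assms(2) S(3) by simp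
  then obtain i where xS: "x \<in> S i" by (rule UN_E)
  have Si: "S i \<subseteq> E" using S(3) by (simp add: UN_upper)
  have "compact_hsd (S i)" using S(1) by simp
  then obtain J kk where kk: "kk 0 = 0" "\<forall>j<J. kk j \<le> kk (Suc j)"
    "S i = (\<Union>j<J. {kk j..kk (Suc j)} \<times> {j})"
    unfolding compact_hsd_def by (elim exE conjE) (rule that)
  show ?thesis
  proof (rule that)
    show "kk 0 = 0" by (rule kk(1))
    show "\<forall>j<J. kk j \<le> kk (Suc j)" by (rule kk(2))
    show "x \<in> (\<Union>j<J. {kk j..kk (Suc j)} \<times> {j})" using xS kk(3) by simp
    show "(\<Union>j<J. {kk j..kk (Suc j)} \<times> {j}) \<subseteq> E" using Si kk(3) by simp
  qed
qed

lemma row_exists: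
  assumes "kk 0 = (0::nat)"
  shows "j < J \<Longrightarrow> b \<le> kk (Suc j) \<Longrightarrow> \<exists>j'\<le>j. kk j' \<le> b \<and> b \<le> kk (Suc j')"
proof (induction j arbitrary: b)
  case 0
  then have "kk 0 \<le> b \<and> b \<le> kk (Suc 0)" using assms by simp
  then show ?case by blast
next
  case (Suc j)
  show ?case
  proof (cases "b \<le> kk (Suc j)")
    case True
    have "j < J" using Suc.prems(1) by simp
    then obtain j' where "j' \<le> j" "kk j' \<le> b \<and> b \<le> kk (Suc j')" using Suc.IH True by blast
    then have "j' \<le> Suc j" "kk j' \<le> b \<and> b \<le> kk (Suc j')" by simp_all
    then show ?thesis by blast
  next
    case False
    then have "kk (Suc j) \<le> b \<and> b \<le> kk (Suc (Suc j))" using Suc.prems(2) by simp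
    then show ?thesis by blast
  qed
qed

lemma hsd_down_k:
  assumes "hsd E" "(a, j) \<in> E" "b \<le> a"
  shows "\<exists>j'. (b, j') \<in> E"
proof -
  obtain J kk where kk: "kk 0 = 0" "\<forall>j<J. kk j \<le> kk (Suc j)"
    "(a,j) \<in> (\<Union>j<J. {kk j..kk (Suc j)} \<times> {j})" "(\<Union>j<J. {kk j..kk (Suc j)} \<times> {j}) \<subseteq> E"
    by (rule hsd_unfold[OF assms(1,2)])
  then have "j < J" "a \<le> kk (Suc j)" by auto
  have "b \<le> kk (Suc j)" using assms(3) \<open>a \<le> kk (Suc j)\<close> by (rule le_trans)
  then have "\<exists>j'\<le>j. kk j' \<le> b \<and> b \<le> kk (Suc j')"
    by (rule row_exists[where kk=kk and j=j and J=J and b=b, OF kk(1) \<open>j < J\<close>])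
  then obtain j' where "j' \<le> j" "kk j' \<le> b" "b \<le> kk (Suc j')" by blast
  then have "(b, j') \<in> (\<Union>j<J. {kk j..kk (Suc j)} \<times> {j})" using \<open>j < J\<close> by auto
  then show ?thesis using kk(4) by blast
qed

lemma hsd_down_j:
  assumes "hsd E" "(a, j) \<in> E" "j' \<le> j"
  shows "\<exists>a'. (a', j') \<in> E"
proof -
  obtain J kk where kk: "kk 0 = 0" "\<forall>j<J. kk j \<le> kk (Suc j)"
    "(a,j) \<in> (\<Union>j<J. {kk j..kk (Suc j)} \<times> {j})" "(\<Union>j<J. {kk j..kk (Suc j)} \<times> {j}) \<subseteq> E"
    by (rule hsd_unfold[OF assms(1,2)])
  then have "j' < J" using assms(3) by auto
  then have "(kk j', j') \<in> (\<Union>j<J. {kk j..kk (Suc j)} \<times> {j})" using kk(2) by auto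
  then show ?thesis using kk(4) by blast
qed

lemma hsd_jbar:
  assumes "hsd E" "(Suc k, j) \<in> E"
  shows "(k, jbar E k) \<in> E" "(Suc k, jbar E k) \<in> E"
proof -
  have ne: "{j. (Suc k, j) \<in> E} \<noteq> {}" using assms by auto
  show m: "(Suc k, jbar E k) \<in> E" unfolding jbar_def using Inf_nat_def1[OF ne] by auto
  obtain J kk where kk: "kk 0 = 0" "\<forall>j<J. kk j \<le> kk (Suc j)"
    "(Suc k, jbar E k) \<in> (\<Union>j<J. {kk j..kk (Suc j)} \<times> {j})" "(\<Union>j<J. {kk j..kk (Suc j)} \<times> {j}) \<subseteq> E"
    by (rule hsd_unfold[OF assms(1) m])
  let ?j = "jbar E k"
  have j: "?j < J" "kk ?j \<le> Suc k" "Suc k \<le> kk (Suc ?j)" using kk(3) by auto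
  show "(k, jbar E k) \<in> E"
  proof (cases "kk ?j \<le> k")
    case True
    then have "(k, ?j) \<in> (\<Union>j<J. {kk j..kk (Suc j)} \<times> {j})" using j by auto
    then show ?thesis using kk(4) by blast
  next
    case False
    then have eq: "kk ?j = Suc k" using j by auto
    have "?j \<noteq> 0"
    proof
      assume "?j = 0" then show False using kk(1) eq by simp
    qed
    then obtain p where p: "?j = Suc p" by (cases ?j) auto
    then have "p < J" "kk p \<le> kk (Suc p)" using j kk(2) by auto
    then have "(Suc k, p) \<in> (\<Union>j<J. {kk j..kk (Suc j)} \<times> {j})" using eq p by auto
    then have "(Suc k, p) \<in> E" using kk(4) by blast
    then have "?j \<le> p" unfolding jbar_def by (simp add: wellorder_Inf_le1)
    then show ?thesis using p by auto
  qed
qed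

lemma hsd_kbar:
  assumes "hsd E" "(a, Suc j) \<in> E"
  shows "(kbar E j, j) \<in> E" "(kbar E j, Suc j) \<in> E"
proof -
  have ne: "{k. (k, Suc j) \<in> E} \<noteq> {}" using assms by auto
  show m: "(kbar E j, Suc j) \<in> E" unfolding kbar_def using Inf_nat_def1[OF ne] by auto
  obtain J kk where kk: "kk 0 = 0" "\<forall>j<J. kk j \<le> kk (Suc j)"
    "(kbar E j, Suc j) \<in> (\<Union>j<J. {kk j..kk (Suc j)} \<times> {j})" "(\<Union>j<J. {kk j..kk (Suc j)} \<times> {j}) \<subseteq> E"
    by (rule hsd_unfold[OF assms(1) m])
  have j: "Suc j < J" "kk (Suc j) \<le> kbar E j" using kk(3) by auto
  have "(kk (Suc j), Suc j) \<in> (\<Union>j<J. {kk j..kk (Suc j)} \<times> {j})" using j kk(2) by auto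
  then have "(kk (Suc j), Suc j) \<in> E" using kk(4) by blast
  then have "kbar E j \<le> kk (Suc j)" unfolding kbar_def by (simp add: wellorder_Inf_le1)
  then have eq: "kbar E j = kk (Suc j)" using j by auto
  have "j < J" "kk j \<le> kk (Suc j)" using j kk(2) by auto
  then have "(kbar E j, j) \<in> (\<Union>j<J. {kk j..kk (Suc j)} \<times> {j})" using eq by auto
  then show "(kbar E j, j) \<in> E" using kk(4) by blast
qed

lemma infinite_nat_ge:
  assumes "infinite (A::nat set)" shows "\<exists>a\<in>A. b \<le> a"
proof (rule ccontr)
  assume "\<not> (\<exists>a\<in>A. b \<le> a)"
  then have "A \<subseteq> {..<b}" by (auto simp: not_le)
  then have "finite A" by (rule finite_subset) simp
  then show False using assms by simp
qed

lemma subseq_to_infty: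
  assumes "strict_mono (r::nat \<Rightarrow> nat)" "\<And>i. r i \<le> g i"
  shows "filterlim g at_top sequentially"
  by (rule filterlim_at_top_mono[OF filterlim_subseq[OF assms(1)]]) (use assms(2) in auto)

theorem theorem2:
  fixes C D :: "('s::euclidean_space \<times> 'f::euclidean_space) set"
    and Fs :: "'s \<times> 'f \<Rightarrow> 's set" and Ff :: "'s \<times> 'f \<Rightarrow> 'f set"
    and G :: "'s \<times> 'f \<Rightarrow> ('s \<times> 'f) set"
    and E :: "(nat \<times> nat) set" and \<Phi> :: "nat \<times> nat \<Rightarrow> 's \<times> 'f"
    and hs hf :: "nat \<Rightarrow> real"
    and \<Lambda> :: "'s \<Rightarrow> 'f set"
  assumes "hybrid_basic_conditions C (F1 Fs Ff) D G"
    and "tt_asym_sim C Fs Ff D G E \<Phi> hs hf"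
    and "compact (gph \<Lambda>)"
    and "omega_limit E \<Phi> \<subseteq> gph \<Lambda>"
  shows "asym_sim (CR \<Lambda> C) (FR \<Lambda> C Fs) (DR \<Lambda> D) (GR \<Lambda> D G) E (\<lambda>p. fst (\<Phi> p)) hs"
proof -
  note tt_all = assms(2)[unfolded tt_asym_sim_def]
  note tt = tt_all[THEN conjunct1] tt_all[THEN conjunct2, THEN conjunct1]
    tt_all[THEN conjunct2, THEN conjunct2, THEN conjunct1]
    tt_all[THEN conjunct2, THEN conjunct2, THEN conjunct2]
  note bch = tt(1)[unfolded bounded_complete_hseq_def]
  note hsd = bch[THEN conjunct1] and bE = bch[THEN conjunct2, THEN conjunct1]
    and cE = bch[THEN conjunct2, THEN conjunct2]
  have om: "\<And>s y. (\<forall>i. s i \<in> E) \<Longrightarrow> filterlim (\<lambda>i. fst (s i) + snd (s i)) at_top sequentially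
      \<Longrightarrow> (\<lambda>i. \<Phi> (s i)) \<longlonglongrightarrow> y \<Longrightarrow> y \<in> gph \<Lambda>"
  proof -
    fix s y assume a: "\<forall>i. s i \<in> E" "filterlim (\<lambda>i. fst (s i) + snd (s i)) at_top sequentially"
      "(\<lambda>i. \<Phi> (s i)) \<longlonglongrightarrow> y"
    have "y \<in> omega_limit E \<Phi>" unfolding omega_limit_def
      by (rule CollectI, rule exI[of _ s]) (intro conjI a)
    then show "y \<in> gph \<Lambda>" by (rule subsetD[OF assms(4)])
  qed
  have b1: "bounded_complete_hseq E (\<lambda>p. fst (\<Phi> p))"
  proof -
    have "(\<lambda>p. fst (\<Phi> p)) ` E = fst ` (\<Phi> ` E)" by auto
    then have "bounded ((\<lambda>p. fst (\<Phi> p)) ` E)" using bounded_fst[OF bE] by simp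
    then show ?thesis unfolding bounded_complete_hseq_def by (intro conjI hsd cE)
  qed
  note adm = tt(2)[unfolded tt_admissible_def, THEN conjunct1]
  have part3: "complete_k E \<longrightarrow> (\<exists>f::nat \<Rightarrow> 's. bounded (range f) \<and>
         acc_pts (\<lambda>k. ((\<lambda>p. fst (\<Phi> p)) (k, jbar E k), f k)) \<subseteq> gph_on (CR \<Lambda> C) (FR \<Lambda> C Fs) \<and>
         sum_cond E hs (\<lambda>p. fst (\<Phi> p)) f)"
  proof
    assume ck: "complete_k E"
    then obtain f :: "nat \<Rightarrow> 's \<times> 'f" where f: "bounded (range f)"
      "acc_pts (\<lambda>k. (\<Phi> (k, jbar E k), f k)) \<subseteq> gph_on C (F1 Fs Ff)"
      "sum_cond E hs (\<lambda>p. fst (\<Phi> p)) (\<lambda>k. fst (f k))"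
      using mp[OF tt(3) ck] by blast
    have inE: "(k, jbar E k) \<in> E" for k
    proof -
      obtain a where a: "a \<in> fst ` E" "Suc k \<le> a"
        using infinite_nat_ge ck unfolding complete_k_def by blast
      then obtain j where "(a, j) \<in> E" by auto
      then obtain j' where "(Suc k, j') \<in> E" using hsd_down_k[OF hsd] a(2) by blast
      then show ?thesis using hsd_jbar[OF hsd] by blast
    qed
    let ?X = "\<lambda>k. (\<Phi> (k, jbar E k), f k)"
    have bX: "bounded (\<Phi> ` E \<times> range f)" using bE f(1) by (rule bounded_Times)
    have bfs: "bounded (range (\<lambda>k. fst (f k)))"
    proof -
      have "range (\<lambda>k. fst (f k)) = fst ` range f" by auto
      then show ?thesis using bounded_fst[OF f(1)] by simp
    qed
    have accs: "acc_pts (\<lambda>k. ((\<lambda>p. fst (\<Phi> p)) (k, jbar E k), fst (f k))) \<subseteq> gph_on (CR \<Lambda> C) (FR \<Lambda> C Fs)"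
    proof
      fix p assume "p \<in> acc_pts (\<lambda>k. ((\<lambda>p. fst (\<Phi> p)) (k, jbar E k), fst (f k)))"
      then obtain r where r: "strict_mono r"
        "((\<lambda>k. (fst (\<Phi> (k, jbar E k)), fst (f k))) \<circ> r) \<longlonglongrightarrow> p"
        unfolding acc_pts_def by auto
      have "range (?X \<circ> r) \<subseteq> \<Phi> ` E \<times> range f" using inE by auto
      then have "bounded (range (?X \<circ> r))" using bounded_subset[OF bX] by blast
      then obtain l r2 where r2: "strict_mono r2" "((?X \<circ> r) \<circ> r2) \<longlonglongrightarrow> l"
        using bounded_imp_convergent_subsequence by blast
      have "strict_mono (r \<circ> r2)" using r(1) r2(1) by (rule strict_mono_o)
      then have "l \<in> acc_pts ?X" unfolding acc_pts_def using r2(2) by (intro CollectI exI[of _ "r \<circ> r2"]) (simp add: o_assoc)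
      then have lg: "l \<in> gph_on C (F1 Fs Ff)" using f(2) by (rule subsetD[rotated])
      obtain a af v w where l: "l = ((a, af), (v, w))" by (metis prod.collapse)
      have c1: "(\<lambda>i. \<Phi> (r (r2 i), jbar E (r (r2 i)))) \<longlonglongrightarrow> (a, af)"
        using tendsto_fst[OF r2(2)] l by (simp add: o_def)
      have c2: "(\<lambda>i. f (r (r2 i))) \<longlonglongrightarrow> (v, w)"
        using tendsto_snd[OF r2(2)] l by (simp add: o_def)
      have "(\<lambda>i. (fst (\<Phi> (r (r2 i), jbar E (r (r2 i)))), fst (f (r (r2 i))))) \<longlonglongrightarrow> (a, v)"
        using tendsto_Pair[OF tendsto_fst[OF c1] tendsto_fst[OF c2]] by simp
      moreover have "(\<lambda>i. (fst (\<Phi> (r (r2 i), jbar E (r (r2 i)))), fst (f (r (r2 i))))) \<longlonglongrightarrow> p"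
        using LIMSEQ_subseq_LIMSEQ[OF r(2) r2(1)] by (simp add: o_def)
      ultimately have pe: "p = (a, v)" using LIMSEQ_unique by blast
      have "(a, af) \<in> gph \<Lambda>"
      proof (rule om[of "\<lambda>i. (r (r2 i), jbar E (r (r2 i)))"])
        show "\<forall>i. (r (r2 i), jbar E (r (r2 i))) \<in> E" using inE by auto
        show "filterlim (\<lambda>i. fst (r (r2 i), jbar E (r (r2 i))) + snd (r (r2 i), jbar E (r (r2 i)))) at_top sequentially"
          using subseq_to_infty[OF \<open>strict_mono (r \<circ> r2)\<close>] by simp
        show "(\<lambda>i. \<Phi> (r (r2 i), jbar E (r (r2 i)))) \<longlonglongrightarrow> (a, af)" by (rule c1)
      qed
      then have afL: "af \<in> LambdaR \<Lambda> C a" using lg l unfolding gph_def LambdaR_def gph_on_def by auto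
      have vF: "v \<in> Fs (a, af)" using lg l unfolding gph_on_def F1_def by auto
      have "a \<in> CR \<Lambda> C" using afL unfolding CR_def by auto
      moreover have "v \<in> FR \<Lambda> C Fs a"
      proof -
        have vS: "v \<in> {fs. \<exists>xf \<in> LambdaR \<Lambda> C a. fs \<in> Fs (a, xf)}" using afL vF by auto
        show ?thesis unfolding FR_def by (rule subsetD[OF closure_subset subsetD[OF hull_subset vS]])
      qed
      ultimately show "p \<in> gph_on (CR \<Lambda> C) (FR \<Lambda> C Fs)" using pe unfolding gph_on_def by auto
    qed
    show "\<exists>f::nat \<Rightarrow> 's. bounded (range f) \<and>
         acc_pts (\<lambda>k. ((\<lambda>p. fst (\<Phi> p)) (k, jbar E k), f k)) \<subseteq> gph_on (CR \<Lambda> C) (FR \<Lambda> C Fs) \<and>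
         sum_cond E hs (\<lambda>p. fst (\<Phi> p)) f" by (intro exI[of _ "\<lambda>k. fst (f k)"] conjI bfs accs f(3))
  qed
  have part4: "complete_j E \<longrightarrow>
         acc_pts (\<lambda>j. ((\<lambda>p. fst (\<Phi> p)) (kbar E j, j), (\<lambda>p. fst (\<Phi> p)) (kbar E j, Suc j))) \<subseteq> gph_on (DR \<Lambda> D) (GR \<Lambda> D G)"
  proof
    assume cj: "complete_j E"
    have inE: "(kbar E j, j) \<in> E \<and> (kbar E j, Suc j) \<in> E" for j
    proof -
      obtain b where b: "b \<in> snd ` E" "Suc j \<le> b"
        using infinite_nat_ge cj unfolding complete_j_def by blast
      then obtain a where "(a, b) \<in> E" by auto
      then obtain a' where "(a', Suc j) \<in> E" using hsd_down_j[OF hsd] b(2) by blast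
      then show ?thesis using hsd_kbar[OF hsd] by blast
    qed
    let ?Y = "\<lambda>j. (\<Phi> (kbar E j, j), \<Phi> (kbar E j, Suc j))"
    have bY: "bounded (\<Phi> ` E \<times> \<Phi> ` E)" using bE bE by (rule bounded_Times)
    show "acc_pts (\<lambda>j. ((\<lambda>p. fst (\<Phi> p)) (kbar E j, j), (\<lambda>p. fst (\<Phi> p)) (kbar E j, Suc j))) \<subseteq> gph_on (DR \<Lambda> D) (GR \<Lambda> D G)"
    proof
      fix p assume "p \<in> acc_pts (\<lambda>j. ((\<lambda>p. fst (\<Phi> p)) (kbar E j, j), (\<lambda>p. fst (\<Phi> p)) (kbar E j, Suc j)))"
      then obtain r where r: "strict_mono r"
        "((\<lambda>j. (fst (\<Phi> (kbar E j, j)), fst (\<Phi> (kbar E j, Suc j)))) \<circ> r) \<longlonglongrightarrow> p"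
        unfolding acc_pts_def by auto
      have "range (?Y \<circ> r) \<subseteq> \<Phi> ` E \<times> \<Phi> ` E" using inE by auto
      then have "bounded (range (?Y \<circ> r))" using bounded_subset[OF bY] by blast
      then obtain l r2 where r2: "strict_mono r2" "((?Y \<circ> r) \<circ> r2) \<longlonglongrightarrow> l"
        using bounded_imp_convergent_subsequence by blast
      have "strict_mono (r \<circ> r2)" using r(1) r2(1) by (rule strict_mono_o)
      then have "l \<in> acc_pts ?Y" unfolding acc_pts_def using r2(2) by (intro CollectI exI[of _ "r \<circ> r2"]) (simp add: o_assoc)
      then have lg: "l \<in> gph_on D G" using mp[OF tt(4) cj] by (rule subsetD[rotated])
      obtain a af b bf where l: "l = ((a, af), (b, bf))" by (metis prod.collapse)
      have c1: "(\<lambda>i. \<Phi> (kbar E (r (r2 i)), r (r2 i))) \<longlonglongrightarrow> (a, af)"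
        using tendsto_fst[OF r2(2)] l by (simp add: o_def)
      have c2: "(\<lambda>i. \<Phi> (kbar E (r (r2 i)), Suc (r (r2 i)))) \<longlonglongrightarrow> (b, bf)"
        using tendsto_snd[OF r2(2)] l by (simp add: o_def)
      have "(\<lambda>i. (fst (\<Phi> (kbar E (r (r2 i)), r (r2 i))), fst (\<Phi> (kbar E (r (r2 i)), Suc (r (r2 i)))))) \<longlonglongrightarrow> (a, b)"
        using tendsto_Pair[OF tendsto_fst[OF c1] tendsto_fst[OF c2]] by simp
      moreover have "(\<lambda>i. (fst (\<Phi> (kbar E (r (r2 i)), r (r2 i))), fst (\<Phi> (kbar E (r (r2 i)), Suc (r (r2 i)))))) \<longlonglongrightarrow> p"
        using LIMSEQ_subseq_LIMSEQ[OF r(2) r2(1)] by (simp add: o_def)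
      ultimately have pe: "p = (a, b)" using LIMSEQ_unique by blast
      have "(a, af) \<in> gph \<Lambda>"
      proof (rule om[of "\<lambda>i. (kbar E (r (r2 i)), r (r2 i))"])
        show "\<forall>i. (kbar E (r (r2 i)), r (r2 i)) \<in> E" using inE by auto
        show "filterlim (\<lambda>i. fst (kbar E (r (r2 i)), r (r2 i)) + snd (kbar E (r (r2 i)), r (r2 i))) at_top sequentially"
          using subseq_to_infty[OF \<open>strict_mono (r \<circ> r2)\<close>] by simp
        show "(\<lambda>i. \<Phi> (kbar E (r (r2 i)), r (r2 i))) \<longlonglongrightarrow> (a, af)" by (rule c1)
      qed
      then have afL: "af \<in> LambdaR \<Lambda> D a" using lg l unfolding gph_def LambdaR_def gph_on_def by auto
      have bG: "(b, bf) \<in> G (a, af)" using lg l unfolding gph_on_def by auto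
      have "a \<in> DR \<Lambda> D" using afL unfolding DR_def by auto
      moreover have "b \<in> GR \<Lambda> D G a"
        unfolding GR_def using afL bG by (auto intro!: bexI[of _ af] image_eqI[of b fst "(b, bf)"])
      ultimately show "p \<in> gph_on (DR \<Lambda> D) (GR \<Lambda> D G)" using pe unfolding gph_on_def by auto
    qed
  qed
  show ?thesis unfolding asym_sim_def by (rule conjI[OF b1 conjI[OF adm conjI[OF part3 part4]]])
qed

end
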